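(* Let $U_0$, $T(s)$, $A$, $U_l$, $\varepsilon_0$, $u_0$, $F$, $\mathcal{F}$ be as in the context, satisfying (A1)–(A4). Then $u_0\in U_l$ for all nonnegative integers $l$.
   Context: $U_0$ is a real Banach space with norm $\|\cdot\|_0$, $\{T(s)\}_{s\in\mathbb{R}}$ a strongly continuous group of bounded linear operators on $U_0$ with generator $A$, $U_l:=D(A^l)=\{u\in U_0: T(\cdot)u\in C^l(\mathbb{R};U_0)\}$ with norm $\|u\|_l:=\sum_{k=0}^l\|A^ku\|_0$. $\varepsilon_0>0$, $u_0\in U_0$, $F:[-\varepsilon_0,\varepsilon_0]\times U_0\to U_0$ with $F(0,u_0)=0$, and $\mathcal{F}(\lambda,s,u):=T(s)F(\lambda,T(-s)u)$. Assumptions: (A1) for every $\lambda$, $(s,u)\mapsto\mathcal{F}(\lambda,s,u)$ is in $C^\infty(\mathbb{R}\times U_0;U_0)$, with partial derivatives $\partial_s^k\partial_u^j\mathcal{F}$; $\partial_u^jF(\lambda,u):=\partial_u^j\mathcal{F}(\lambda,0,u)$. (A2) for all $j,k,l\ge0$ and $u,u_1,\dots,u_j\in U_l$, $\lambda\mapsto\partial_s^k\partial_u^j\mathcal{F}(\lambda,0,u)(u_1,\dots,u_j)$ is in $C^l([-\varepsilon_0,\varepsilon_0];U_0)$; its $l$-th derivative is written $\partial_\lambda^l\partial_s^k\partial_u^j\mathcal{F}(\lambda,0,u)(u_1,\dots,u_j)$. (A3) for all $j,k,l\ge0$ there is $c_{jkl}>0$ with $\|\partial_\lambda^l\partial_s^k\partial_u^j\mathcal{F}(\lambda,0,u)(u_1,\dots,u_j)\|_0\le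 c_{jkl}\|u_1\|_l\cdots\|u_j\|_l$ for all $\lambda\in[-\varepsilon_0,\varepsilon_0]$, $u,u_i\in U_l$, $\|u-u_0\|_l\le1$. (A4) there is $c_0>0$ such that for all $\lambda\in[-\varepsilon_0,\varepsilon_0]$, $\partial_uF(\lambda,u_0)$ is Fredholm of index zero $U_0\to U_0$ and $\|\partial_uF(\lambda,u_0)u\|_0\ge c_0\|u\|_0$ for all $u\in U_0$. *)

theory Defs
  imports "HOL-Analysis.Analysis"
begin

definition sc_group :: "(real \<Rightarrow> 'a::banach \<Rightarrow> 'a) \<Rightarrow> bool" where
  "sc_group T \<longleftrightarrow> (\<forall>s. bounded_linear (T s)) \<and> T 0 = id \<and>
     (\<forall>s t. T (s + t) = T s \<circ> T t) \<and> (\<forall>u. continuous_on UNIV (\<lambda>s. T s u))"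

definition gen_dom :: "(real \<Rightarrow> 'a::banach \<Rightarrow> 'a) \<Rightarrow> 'a set" where
  "gen_dom T = {u. (\<lambda>s. T s u) differentiable (at 0)}"

definition gen :: "(real \<Rightarrow> 'a::banach \<Rightarrow> 'a) \<Rightarrow> 'a \<Rightarrow> 'a" where
  "gen T u = vector_derivative (\<lambda>s. T s u) (at 0)"

definition Udom :: "(real \<Rightarrow> 'a::banach \<Rightarrow> 'a) \<Rightarrow> nat \<Rightarrow> 'a set" where
  "Udom T l = {u. \<forall>k<l. (gen T ^^ k) u \<in> gen_dom T}"

definition lnorm :: "(real \<Rightarrow> 'a::banach \<Rightarrow> 'a) \<Rightarrow> nat \<Rightarrow> 'a \<Rightarrow> real" where
  "lnorm T l u = (\<Sum>k\<le>l. norm ((gen T ^^ k) u))"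

text \<open>A j-linear map is represented as a function on lists of length j.\<close>
definition bounded_multilinear :: "nat \<Rightarrow> ('x::real_normed_vector list \<Rightarrow> 'y::real_normed_vector) \<Rightarrow> bool" where
  "bounded_multilinear j M \<longleftrightarrow>
     (\<forall>hs i. length hs = j \<longrightarrow> i < j \<longrightarrow> linear (\<lambda>h. M (hs[i := h]))) \<and>
     (\<exists>C. \<forall>hs. length hs = j \<longrightarrow> norm (M hs) \<le> C * prod_list (map norm hs))"

definition mnorm :: "nat \<Rightarrow> ('x::real_normed_vector list \<Rightarrow> 'y::real_normed_vector) \<Rightarrow> real" where
  "mnorm j M = Sup {norm (M hs) | hs. length hs = j \<and> (\<forall>h\<in>set hs. norm h \<le> 1)}"

text \<open>D j x is the j-th Frechet derivative of f at x (a bounded j-linear map), and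
  D (j+1) x (h # hs) is the Frechet derivative of x \<mapsto> D j x in direction h, the
  remainder measured in the operator norm of j-linear maps.  A function having such a
  family of derivatives (on the whole space) is C^infinity.\<close>
definition higher_derivs :: "('x::real_normed_vector \<Rightarrow> 'y::real_normed_vector) \<Rightarrow>
    (nat \<Rightarrow> 'x \<Rightarrow> 'x list \<Rightarrow> 'y) \<Rightarrow> bool" where
  "higher_derivs f D \<longleftrightarrow> (\<forall>x. D 0 x [] = f x) \<and>
     (\<forall>j x. bounded_multilinear j (D j x)) \<and>
     (\<forall>j x. ((\<lambda>h. mnorm j (\<lambda>hs. D j (x + h) hs - D j x hs - D (Suc j) x (h # hs)) / norm h)
              \<longlongrightarrow> 0) (at 0))"

text \<open>Partial derivative d_s^k d_u^j of a map on real x U_0 at (s,u), in directions us.\<close>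
definition pderiv_su :: "(nat \<Rightarrow> real \<times> 'a \<Rightarrow> (real \<times> 'a) list \<Rightarrow> 'b) \<Rightarrow> nat \<Rightarrow> real \<Rightarrow> 'a::real_normed_vector \<Rightarrow> 'a list \<Rightarrow> 'b" where
  "pderiv_su D k s u us = D (k + length us) (s, u) (replicate k (1, 0) @ map (\<lambda>v. (0, v)) us)"

definition fredholm_index_zero :: "('a::real_normed_vector \<Rightarrow> 'a) \<Rightarrow> bool" where
  "fredholm_index_zero L \<longleftrightarrow> bounded_linear L \<and> closed (range L) \<and>
     (\<exists>K W. finite K \<and> independent K \<and> span K = {v. L v = 0} \<and>
            finite W \<and> independent W \<and> range L \<inter> span W = {0} \<and>
            {x + y | x y. x \<in> range L \<and> y \<in> span W} = UNIV \<and>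
            card K = card W)"

definition Cl_with :: "nat \<Rightarrow> real set \<Rightarrow> (nat \<Rightarrow> real \<Rightarrow> 'a::real_normed_vector) \<Rightarrow> bool" where
  "Cl_with l S G \<longleftrightarrow> (\<forall>m<l. \<forall>t\<in>S. (G m has_vector_derivative G (Suc m) t) (at t within S)) \<and>
     continuous_on S (G l)"

end

theory Submission
  imports Defs
begin

lemma ml_lin: "bounded_multilinear m M \<Longrightarrow> length hs = m \<Longrightarrow> i < m \<Longrightarrow> linear (\<lambda>h. M (hs[i := h]))"
  by (simp add: bounded_multilinear_def)

lemma ml_bound:
  assumes "bounded_multilinear m M"
  obtains C where "C \<ge> 0" "\<And>hs. length hs = m \<Longrightarrow> norm (M hs) \<le> C * prod_list (map norm hs)"
proof -
  obtain C where C: "\<And>hs. length hs = m \<Longrightarrow> norm (M hs) \<le> C * prod_list (map norm hs)"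
    using assms unfolding bounded_multilinear_def by blast
  have "norm (M hs) \<le> max C 0 * prod_list (map norm hs)" if "length hs = m" for hs
  proof -
    have "0 \<le> prod_list (map norm hs)" by (induction hs) auto
    then have "C * prod_list (map norm hs) \<le> max C 0 * prod_list (map norm hs)"
      by (simp add: mult_right_mono)
    then show ?thesis using C[OF that] by linarith
  qed
  then show ?thesis using that[of "max C 0"] by auto
qed

lemma ml_upd0:
  assumes "bounded_multilinear m M" "length hs = m" "i < m"
  shows "M (hs[i := 0]) = 0"
  using linear_0[OF ml_lin[OF assms]] by simp

lemma ml_zero:
  assumes "bounded_multilinear m M" "length hs = m" "i < m" "hs ! i = 0"
  shows "M hs = 0"
  using ml_upd0[OF assms(1-3)] assms(4) by (metis list_update_id)

lemma ml_diff:
  assumes "bounded_multilinear m M" "length hs = m" "i < m"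
  shows "M (hs[i := x - y]) = M (hs[i := x]) - M (hs[i := y])"
  using linear_diff[OF ml_lin[OF assms]] by simp

lemma ml_add:
  assumes "bounded_multilinear m M" "length hs = m" "i < m"
  shows "M (hs[i := x + y]) = M (hs[i := x]) + M (hs[i := y])"
  using linear_add[OF ml_lin[OF assms]] by simp

lemma ml_scale:
  assumes "bounded_multilinear m M" "length hs = m" "i < m"
  shows "M (hs[i := r *\<^sub>R x]) = r *\<^sub>R M (hs[i := x])"
  using linear_scale[OF ml_lin[OF assms]] by simp

lemma ml_tel:
  assumes M: "bounded_multilinear m M"
  shows "M (map a [0..<m]) - M (map b [0..<m]) =
    (\<Sum>i<m. M (map (\<lambda>j. if j < i then b j else if j = i then a i - b i else a j) [0..<m]))"
proof -
  define mix where "mix i = map (\<lambda>j. if j < i then b j else a j) [0..<m]" for i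
  have step: "M (mix i) - M (mix (Suc i)) =
      M (map (\<lambda>j. if j < i then b j else if j = i then a i - b i else a j) [0..<m])"
    if "i < m" for i
  proof -
    define H where "H x = map (\<lambda>j. if j < i then b j else if j = i then x else a j) [0..<m]" for x
    have HH: "H x = (H 0)[i := x]" for x
      unfolding H_def by (rule nth_equalityI) (auto simp: nth_list_update)
    have e1: "(\<lambda>j. if j < i then b j else a j) = (\<lambda>j. if j < i then b j else if j = i then a i else a j)"
      by (rule ext) simp
    have e2: "(\<lambda>j. if j < Suc i then b j else a j) = (\<lambda>j. if j < i then b j else if j = i then b i else a j)"
      by (rule ext) simp
    have "mix i = H (a i)" "mix (Suc i) = H (b i)"
      unfolding mix_def H_def by (simp_all only: e1 e2)
    moreover have "M (H (a i - b i)) = M (H (a i)) - M (H (b i))"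
    proof -
      have l: "length (H 0) = m" by (simp add: H_def)
      have "M (H (a i - b i)) = M ((H 0)[i := a i - b i])" by (rule arg_cong[OF HH])
      also have "\<dots> = M ((H 0)[i := a i]) - M ((H 0)[i := b i])"
        by (rule ml_diff[OF M l that])
      also have "\<dots> = M (H (a i)) - M (H (b i))" using HH[of "a i"] HH[of "b i"] by simp
      finally show ?thesis .
    qed
    ultimately show ?thesis by (simp add: H_def)
  qed
  have "(\<Sum>i<m. M (mix i) - M (mix (Suc i))) = M (mix 0) - M (mix m)"
    by (rule sum_lessThan_telescope')
  moreover have "mix 0 = map a [0..<m]" "mix m = map b [0..<m]"
    unfolding mix_def by auto
  ultimately show ?thesis using step by simp
qed



lemma prod_list_upt_nat: "prod_list (map g [0..<m]) = (\<Prod>j<m. g j)"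
  by (induction m) (simp_all add: lessThan_Suc mult.commute)

lemma sum_list_upt_nat: "sum_list (map g [0..<m]) = (\<Sum>j<m. g j)"
  by (induction m) (simp_all add: lessThan_Suc add.commute)

lemma ml_tendsto:
  assumes M: "bounded_multilinear m M"
    and f: "\<And>i. i < m \<Longrightarrow> ((\<lambda>t. f t i) \<longlongrightarrow> L i) F"
  shows "((\<lambda>t. M (map (f t) [0..<m])) \<longlongrightarrow> M (map L [0..<m])) F"
proof -
  obtain C where C: "C \<ge> 0" "\<And>hs. length hs = m \<Longrightarrow> norm (M hs) \<le> C * prod_list (map norm hs)"
    using ml_bound[OF M] by blast
  define e where "e t i j = (if j < i then L j else if j = i then f t i - L i else f t j)" for t i j
  have tel: "M (map (f t) [0..<m]) - M (map L [0..<m]) = (\<Sum>i<m. M (map (e t i) [0..<m]))" for t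
    using ml_tel[OF M, of "f t" L] unfolding e_def by simp
  have "((\<lambda>t. \<Sum>i<m. M (map (e t i) [0..<m])) \<longlongrightarrow> 0) F"
  proof (rule tendsto_null_sum)
    fix i assume i: "i \<in> {..<m}"
    show "((\<lambda>t. M (map (e t i) [0..<m])) \<longlongrightarrow> 0) F"
    proof (rule Lim_null_comparison)
      have "norm (M (map (e t i) [0..<m])) \<le> C * (\<Prod>j<m. norm (e t i j))" for t
        using C(2)[of "map (e t i) [0..<m]"] by (simp add: prod_list_upt_nat o_def)
      then show "\<forall>\<^sub>F t in F. norm (M (map (e t i) [0..<m])) \<le> C * (\<Prod>j<m. norm (e t i j))"
        by simp
      have lim: "((\<lambda>t. \<Prod>j<m. norm (e t i j)) \<longlongrightarrow>
          (\<Prod>j<m. norm (if j < i then L j else if j = i then 0 else L j))) F"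
      proof (rule tendsto_prod)
        fix j assume j: "j \<in> {..<m}"
        show "((\<lambda>t. norm (e t i j)) \<longlongrightarrow> norm (if j < i then L j else if j = i then 0 else L j)) F"
        proof (cases "j < i")
          case True then show ?thesis by (simp add: e_def)
        next
          case False
          show ?thesis
          proof (cases "j = i")
            case True
            have "((\<lambda>t. f t i - L i) \<longlongrightarrow> L i - L i) F" using f i by (intro tendsto_diff) auto
            then show ?thesis using True False by (simp add: e_def tendsto_norm_zero)
          next
            case False2: False
            then show ?thesis using False j f by (auto simp: e_def intro!: tendsto_norm)
          qed
        qed
      qed
      have z: "(\<Prod>j<m. norm (if j < i then L j else if j = i then 0 else L j)) = 0"
        using i by (intro prod_zero) auto
      show "((\<lambda>t. C * (\<Prod>j<m. norm (e t i j))) \<longlongrightarrow> 0) F"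
        using tendsto_mult[OF tendsto_const[of C] lim] z by simp
    qed
  qed
  then have "((\<lambda>t. M (map (f t) [0..<m]) - M (map L [0..<m])) \<longlongrightarrow> 0) F"
    using tel by simp
  then show ?thesis by (simp add: Lim_null[symmetric])
qed

lemma ml_homog:
  assumes M: "bounded_multilinear m M"
  shows "M (map (\<lambda>i. r i *\<^sub>R h i) [0..<m]) = (\<Prod>i<m. r i) *\<^sub>R M (map h [0..<m])"
proof -
  have "n \<le> m \<Longrightarrow> M (map (\<lambda>i. if i < n then r i *\<^sub>R h i else h i) [0..<m])
        = (\<Prod>i<n. r i) *\<^sub>R M (map h [0..<m])" for n
  proof (induction n)
    case 0 then show ?case by simp
  next
    case (Suc n)
    define xs where "xs = map (\<lambda>i. if i < n then r i *\<^sub>R h i else h i) [0..<m]"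
    have l: "length xs = m" by (simp add: xs_def)
    have n: "n < m" using Suc.prems by simp
    have e1: "map (\<lambda>i. if i < Suc n then r i *\<^sub>R h i else h i) [0..<m] = xs[n := r n *\<^sub>R h n]"
      unfolding xs_def by (rule nth_equalityI) (auto simp: nth_list_update less_Suc_eq)
    have e2: "xs[n := h n] = xs"
      unfolding xs_def by (rule nth_equalityI) (auto simp: nth_list_update)
    have "M (xs[n := r n *\<^sub>R h n]) = r n *\<^sub>R M (xs[n := h n])"
      by (rule ml_scale[OF M l n])
    then show ?case using Suc e1 e2 by (simp add: xs_def lessThan_Suc mult.commute)
  qed
  from this[of m] have "M (map (\<lambda>i. if i < m then r i *\<^sub>R h i else h i) [0..<m]) = (\<Prod>i<m. r i) *\<^sub>R M (map h [0..<m])"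
    by simp
  moreover have "map (\<lambda>i. if i < m then r i *\<^sub>R h i else h i) [0..<m] = map (\<lambda>i. r i *\<^sub>R h i) [0..<m]"
    by (rule map_cong) auto
  ultimately show ?thesis by simp
qed

lemma ml_mnorm:
  assumes M: "bounded_multilinear m M" and l: "length hs = m"
  shows "norm (M hs) \<le> mnorm m M * prod_list (map norm hs)"
proof (cases "\<exists>i<m. hs ! i = 0")
  case True
  then obtain i where i: "i < m" "hs ! i = 0" by blast
  have "M hs = 0" by (rule ml_zero[OF M l i])
  moreover have "prod_list (map norm hs) = 0"
    using i l by (auto simp: prod_list_zero_iff in_set_conv_nth intro!: exI[of _ i])
  ultimately show ?thesis by simp
next
  case False
  obtain C where C: "C \<ge> 0" "\<And>hs. length hs = m \<Longrightarrow> norm (M hs) \<le> C * prod_list (map norm hs)"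
    using ml_bound[OF M] by blast
  define u where "u i = (1 / norm (hs ! i)) *\<^sub>R (hs ! i)" for i
  have hs: "hs = map (\<lambda>i. norm (hs ! i) *\<^sub>R u i) [0..<m]"
    using False l by (auto simp: u_def intro!: nth_equalityI)
  have f1: "M hs = (\<Prod>i<m. norm (hs ! i)) *\<^sub>R M (map u [0..<m])"
    by (subst hs) (rule ml_homog[OF M])
  have nu: "norm (u j) = 1" if "j < m" for j
    using False that by (simp add: u_def)
  moreover have "prod_list (map norm hs) = (\<Prod>i<m. norm (hs ! i))"
    by (subst hs) (auto simp: prod_list_upt_nat o_def nu intro!: prod.cong)
  moreover have "norm (M (map u [0..<m])) \<le> mnorm m M"
    unfolding mnorm_def
  proof (rule cSup_upper)
    show "norm (M (map u [0..<m])) \<in> {norm (M hs) |hs. length hs = m \<and> (\<forall>h\<in>set hs. norm h \<le> 1)}"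
      using l nu by (intro CollectI exI[of _ "map u [0..<m]"]) (auto simp: in_set_conv_nth)
    show "bdd_above {norm (M hs) |hs. length hs = m \<and> (\<forall>h\<in>set hs. norm h \<le> 1)}"
    proof (rule bdd_aboveI[where M=C])
      fix x assume "x \<in> {norm (M hs) |hs. length hs = m \<and> (\<forall>h\<in>set hs. norm h \<le> 1)}"
      then obtain hs' where h: "length hs' = m" "\<forall>h\<in>set hs'. norm h \<le> 1" and x: "x = norm (M hs')"
        by blast
      have "prod_list (map norm hs') \<le> 1" using h(2)
        by (induction hs') (auto intro!: mult_le_one prod_list_nonneg)
      then have "C * prod_list (map norm hs') \<le> C" using C(1) by (simp add: mult_left_le)
      then show "x \<le> C" using C(2)[OF h(1)] x by linarith
    qed
  qed
  ultimately show ?thesis using f1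
    by (simp add: mult.commute[of "prod _ _"] mult_right_mono prod_nonneg)
qed



lemma vd_iff:
  fixes f :: "real \<Rightarrow> 'b::real_normed_vector"
  shows "(f has_vector_derivative f') (at s) \<longleftrightarrow>
    ((\<lambda>h. (1/h) *\<^sub>R (f (s+h) - f s)) \<longlongrightarrow> f') (at 0)"
proof -
  have "(f has_vector_derivative f') (at s) \<longleftrightarrow>
     ((\<lambda>h. norm (f (s + h) - f s - h *\<^sub>R f') / norm h) \<longlongrightarrow> 0) (at 0)"
    unfolding has_vector_derivative_def has_derivative_at
    by (simp add: bounded_linear_scaleR_left)
  also have "\<dots> \<longleftrightarrow> ((\<lambda>h. norm ((1/h) *\<^sub>R (f (s+h) - f s) - f')) \<longlongrightarrow> 0) (at 0)"
  proof (rule tendsto_cong)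
    show "\<forall>\<^sub>F h in at 0. norm (f (s + h) - f s - h *\<^sub>R f') / norm h =
        norm ((1/h) *\<^sub>R (f (s+h) - f s) - f')"
      unfolding eventually_at_filter
    proof (intro always_eventually allI impI)
      fix h :: real assume "h \<noteq> 0"
      have "(1/h) *\<^sub>R (f (s+h) - f s) - f' = (1/h) *\<^sub>R (f (s + h) - f s - h *\<^sub>R f')"
        using \<open>h \<noteq> 0\<close> by (simp add: algebra_simps)
      then show "norm (f (s + h) - f s - h *\<^sub>R f') / norm h =
        norm ((1/h) *\<^sub>R (f (s+h) - f s) - f')" by (simp add: divide_inverse_commute)
    qed
  qed
  also have "\<dots> \<longleftrightarrow> ((\<lambda>h. (1/h) *\<^sub>R (f (s+h) - f s)) \<longlongrightarrow> f') (at 0)"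
    by (simp add: tendsto_norm_zero_iff Lim_null[symmetric])
  finally show ?thesis .
qed


lemma ml_H_scale:
  assumes M: "bounded_multilinear m M" and i: "i < m"
  shows "M (map (\<lambda>j. if j < i then b j else if j = i then r *\<^sub>R x else a j) [0..<m]) =
         r *\<^sub>R M (map (\<lambda>j. if j < i then b j else if j = i then x else a j) [0..<m])"
proof -
  define H where "H x = map (\<lambda>j. if j < i then b j else if j = i then x else a j) [0..<m]" for x
  have HH: "H x = (H 0)[i := x]" for x
    unfolding H_def by (rule nth_equalityI) (auto simp: nth_list_update)
  have l: "length (H 0) = m" by (simp add: H_def)
  have "M (H (r *\<^sub>R x)) = M ((H 0)[i := r *\<^sub>R x])" by (rule arg_cong[OF HH])
  also have "\<dots> = r *\<^sub>R M ((H 0)[i := x])" by (rule ml_scale[OF M l i])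
  also have "\<dots> = r *\<^sub>R M (H x)" using HH[of x] by simp
  finally show ?thesis unfolding H_def .
qed

lemma cont_shift:
  fixes g :: "real \<Rightarrow> 'b::real_normed_vector"
  assumes "(g has_vector_derivative g') (at s)"
  shows "((\<lambda>t. g (s + t)) \<longlongrightarrow> g s) (at 0)"
proof -
  have "isCont g s" using has_vector_derivative_continuous[OF assms] .
  then have "(g \<longlongrightarrow> g s) (at s)" by (simp add: isCont_def)
  then show ?thesis by (rule LIM_offset_zero)
qed

lemma ml_deriv:
  assumes M: "bounded_multilinear m M"
    and g: "\<And>i. i < m \<Longrightarrow> (g i has_vector_derivative g' i) (at s)"
  shows "((\<lambda>s. M (map (\<lambda>i. g i s) [0..<m])) has_vector_derivative
          (\<Sum>i<m. M ((map (\<lambda>i. g i s) [0..<m])[i := g' i]))) (at s)"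
  unfolding vd_iff
proof -
  define E where "E t i j = (if j < i then g j s else if j = i then (1/t) *\<^sub>R (g i (s+t) - g i s) else g j (s+t))" for t i j
  have tel: "(1/t) *\<^sub>R (M (map (\<lambda>i. g i (s+t)) [0..<m]) - M (map (\<lambda>i. g i s) [0..<m])) =
       (\<Sum>i<m. M (map (E t i) [0..<m]))" for t
  proof -
    have "(1/t) *\<^sub>R (M (map (\<lambda>i. g i (s+t)) [0..<m]) - M (map (\<lambda>i. g i s) [0..<m])) =
      (1/t) *\<^sub>R (\<Sum>i<m. M (map (\<lambda>j. if j < i then g j s else if j = i then g i (s+t) - g i s else g j (s+t)) [0..<m]))"
      using ml_tel[OF M, of "\<lambda>i. g i (s+t)" "\<lambda>i. g i s"] by simp
    also have "\<dots> = (\<Sum>i<m. M (map (E t i) [0..<m]))"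
      unfolding scaleR_sum_right E_def
      by (rule sum.cong[OF refl]) (simp add: ml_H_scale[OF M])
    finally show ?thesis .
  qed
  have lim: "((\<lambda>t. M (map (E t i) [0..<m])) \<longlongrightarrow> M ((map (\<lambda>i. g i s) [0..<m])[i := g' i])) (at 0)"
    if i: "i \<in> {..<m}" for i
  proof -
    have eq: "(map (\<lambda>i. g i s) [0..<m])[i := g' i] =
        map (\<lambda>j. if j < i then g j s else if j = i then g' i else g j s) [0..<m]"
      by (rule nth_equalityI) (auto simp: nth_list_update)
    show ?thesis unfolding eq
    proof (rule ml_tendsto[OF M])
      fix j assume j: "j < m"
      show "((\<lambda>t. E t i j) \<longlongrightarrow> (if j < i then g j s else if j = i then g' i else g j s)) (at 0)"
        using g[OF j] i j by (auto simp: E_def vd_iff cont_shift)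
    qed
  qed
  show "((\<lambda>h. (1 / h) *\<^sub>R (M (map (\<lambda>i. g i (s + h)) [0..<m]) - M (map (\<lambda>i. g i s) [0..<m])))
      \<longlongrightarrow> (\<Sum>i<m. M ((map (\<lambda>i. g i s) [0..<m])[i := g' i]))) (at 0)"
    unfolding tel by (rule tendsto_sum) (rule lim)
qed



lemma hd_ml: "higher_derivs \<Phi> D \<Longrightarrow> bounded_multilinear j (D j x)"
  by (simp add: higher_derivs_def)

lemma hd_lim: "higher_derivs \<Phi> D \<Longrightarrow>
  ((\<lambda>h. mnorm j (\<lambda>hs. D j (x + h) hs - D j x hs - D (Suc j) x (h # hs)) / norm h) \<longlongrightarrow> 0) (at 0)"
  by (simp add: higher_derivs_def)

lemma N_ml:
  assumes HD: "higher_derivs \<Phi> D"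
  shows "bounded_multilinear m (\<lambda>hs. D m (x + h) hs - D m x hs - D (Suc m) x (h # hs))"
proof -
  have M1: "bounded_multilinear m (D m (x+h))" and M2: "bounded_multilinear m (D m x)"
    and M3: "bounded_multilinear (Suc m) (D (Suc m) x)" using hd_ml[OF HD] by auto
  obtain C1 where C1: "C1 \<ge> 0" "\<And>hs. length hs = m \<Longrightarrow> norm (D m (x+h) hs) \<le> C1 * prod_list (map norm hs)"
    using ml_bound[OF M1] by blast
  obtain C2 where C2: "C2 \<ge> 0" "\<And>hs. length hs = m \<Longrightarrow> norm (D m x hs) \<le> C2 * prod_list (map norm hs)"
    using ml_bound[OF M2] by blast
  obtain C3 where C3: "C3 \<ge> 0" "\<And>hs. length hs = Suc m \<Longrightarrow> norm (D (Suc m) x hs) \<le> C3 * prod_list (map norm hs)"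
    using ml_bound[OF M3] by blast
  show ?thesis unfolding bounded_multilinear_def
  proof (intro conjI allI impI)
    fix hs :: "'a list" and i assume l: "length hs = m" and i: "i < m"
    have "linear (\<lambda>k. D (Suc m) x ((h # hs)[Suc i := k]))"
      using ml_lin[OF M3, of "h # hs" "Suc i"] l i by simp
    then show "linear (\<lambda>k. D m (x + h) (hs[i := k]) - D m x (hs[i := k]) - D (Suc m) x (h # hs[i := k]))"
      using ml_lin[OF M1 l i] ml_lin[OF M2 l i] by (auto intro!: linear_compose_sub)
  next
    show "\<exists>C. \<forall>hs. length hs = m \<longrightarrow>
      norm (D m (x + h) hs - D m x hs - D (Suc m) x (h # hs)) \<le> C * prod_list (map norm hs)"
    proof (intro exI[of _ "C1 + C2 + C3 * norm h"] allI impI)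
      fix hs :: "'a list" assume l: "length hs = m"
      have "norm (D m (x + h) hs - D m x hs - D (Suc m) x (h # hs)) \<le>
          norm (D m (x + h) hs) + norm (D m x hs) + norm (D (Suc m) x (h # hs))"
        using norm_triangle_ineq4[of "D m (x + h) hs - D m x hs" "D (Suc m) x (h # hs)"]
          norm_triangle_ineq4[of "D m (x + h) hs" "D m x hs"] by linarith
      also have "\<dots> \<le> C1 * prod_list (map norm hs) + C2 * prod_list (map norm hs) + C3 * (norm h * prod_list (map norm hs))"
        using C1(2)[OF l] C2(2)[OF l] C3(2)[of "h # hs"] l by (intro add_mono) auto
      finally show "norm (D m (x + h) hs - D m x hs - D (Suc m) x (h # hs)) \<le> (C1 + C2 + C3 * norm h) * prod_list (map norm hs)"
        by (simp add: algebra_simps)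
    qed
  qed
qed



lemma D_step:
  fixes D :: "nat \<Rightarrow> 'x::real_normed_vector \<Rightarrow> 'x list \<Rightarrow> 'y::real_normed_vector"
  assumes HD: "higher_derivs \<Phi> D"
    and c: "(c has_vector_derivative c') (at s)"
    and f: "\<And>i. i < m \<Longrightarrow> ((\<lambda>t. f t i) \<longlongrightarrow> L i) (at 0)"
  shows "((\<lambda>t. (1/t) *\<^sub>R (D m (c (s+t)) (map (f t) [0..<m]) - D m (c s) (map (f t) [0..<m])))
          \<longlongrightarrow> D (Suc m) (c s) (c' # map L [0..<m])) (at 0)"
proof -
  define x where "x = c s"
  define \<delta> where "\<delta> t = c (s+t) - c s" for t
  define N where "N h hs = D m (x + h) hs - D m x hs - D (Suc m) x (h # hs)" for h hs
  define \<phi> where "\<phi> h = mnorm m (N h) / norm h" for h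
  have M3: "bounded_multilinear (Suc m) (D (Suc m) x)" using hd_ml[OF HD] by auto
  have Nml: "bounded_multilinear m (N h)" for h unfolding N_def by (rule N_ml[OF HD])
  have \<phi>lim: "(\<phi> \<longlongrightarrow> 0) (at 0)" unfolding \<phi>_def N_def by (rule hd_lim[OF HD])
  have \<phi>0: "\<phi> 0 = 0" by (simp add: \<phi>_def)
  have iC: "isCont \<phi> 0" using \<phi>lim \<phi>0 by (simp add: isCont_def)
  have "((\<lambda>t. c (s+t)) \<longlongrightarrow> c s) (at 0)" by (rule cont_shift[OF c])
  then have \<delta>lim: "(\<delta> \<longlongrightarrow> 0) (at 0)" unfolding \<delta>_def by (simp add: Lim_null[symmetric])
  have \<phi>\<delta>: "((\<lambda>t. \<phi> (\<delta> t)) \<longlongrightarrow> 0) (at 0)"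
    using isCont_tendsto_compose[OF iC \<delta>lim] \<phi>0 by simp
  have dq: "((\<lambda>t. (1/t) *\<^sub>R \<delta> t) \<longlongrightarrow> c') (at 0)" using c unfolding vd_iff \<delta>_def .
  have Nbound: "norm (N h hs) \<le> \<phi> h * norm h * prod_list (map norm hs)" if l: "length hs = m" for h hs
  proof (cases "h = 0")
    case True
    have "D (Suc m) x (0 # hs) = 0" by (rule ml_zero[OF M3]) (use l in auto)
    then show ?thesis using True by (simp add: N_def)
  next
    case False
    then have "\<phi> h * norm h = mnorm m (N h)" by (simp add: \<phi>_def)
    then show ?thesis using ml_mnorm[OF Nml l, of h] by simp
  qed
  have decomp: "(1/t) *\<^sub>R (D m (c (s+t)) (map (f t) [0..<m]) - D m (c s) (map (f t) [0..<m])) =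
      (1/t) *\<^sub>R N (\<delta> t) (map (f t) [0..<m]) + D (Suc m) x (((1/t) *\<^sub>R \<delta> t) # map (f t) [0..<m])" for t
  proof -
    have "D (Suc m) x (((1/t) *\<^sub>R \<delta> t) # map (f t) [0..<m]) =
        D (Suc m) x ((\<delta> t # map (f t) [0..<m])[0 := (1/t) *\<^sub>R \<delta> t])" by simp
    also have "\<dots> = (1/t) *\<^sub>R D (Suc m) x ((\<delta> t # map (f t) [0..<m])[0 := \<delta> t])"
      by (rule ml_scale[OF M3]) auto
    finally have "D (Suc m) x (((1/t) *\<^sub>R \<delta> t) # map (f t) [0..<m]) = (1/t) *\<^sub>R D (Suc m) x (\<delta> t # map (f t) [0..<m])"
      by simp
    moreover have "c (s+t) = x + \<delta> t" by (simp add: x_def \<delta>_def)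
    ultimately show ?thesis by (simp add: N_def x_def algebra_simps)
  qed
  have A: "((\<lambda>t. (1/t) *\<^sub>R N (\<delta> t) (map (f t) [0..<m])) \<longlongrightarrow> 0) (at 0)"
  proof (rule Lim_null_comparison)
    have "norm ((1/t) *\<^sub>R N (\<delta> t) (map (f t) [0..<m])) \<le>
        \<phi> (\<delta> t) * norm ((1/t) *\<^sub>R \<delta> t) * (\<Prod>j<m. norm (f t j))" for t
    proof -
      have "norm ((1/t) *\<^sub>R N (\<delta> t) (map (f t) [0..<m])) = \<bar>1/t\<bar> * norm (N (\<delta> t) (map (f t) [0..<m]))"
        by simp
      also have "\<dots> \<le> \<bar>1/t\<bar> * (\<phi> (\<delta> t) * norm (\<delta> t) * prod_list (map norm (map (f t) [0..<m])))"
        by (rule mult_left_mono[OF Nbound]) auto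
      also have "\<dots> = \<phi> (\<delta> t) * norm ((1/t) *\<^sub>R \<delta> t) * (\<Prod>j<m. norm (f t j))"
        by (simp add: prod_list_upt_nat o_def)
      finally show ?thesis .
    qed
    then show "\<forall>\<^sub>F t in at 0. norm ((1/t) *\<^sub>R N (\<delta> t) (map (f t) [0..<m])) \<le>
        \<phi> (\<delta> t) * norm ((1/t) *\<^sub>R \<delta> t) * (\<Prod>j<m. norm (f t j))" by simp
    have "((\<lambda>t. \<phi> (\<delta> t) * norm ((1/t) *\<^sub>R \<delta> t) * (\<Prod>j<m. norm (f t j))) \<longlongrightarrow>
        0 * norm c' * (\<Prod>j<m. norm (L j))) (at 0)"
      by (intro tendsto_mult tendsto_norm tendsto_prod \<phi>\<delta> dq f) auto
    then show "((\<lambda>t. \<phi> (\<delta> t) * norm ((1/t) *\<^sub>R \<delta> t) * (\<Prod>j<m. norm (f t j))) \<longlongrightarrow> 0) (at 0)"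
      by simp
  qed
  have B: "((\<lambda>t. D (Suc m) x (((1/t) *\<^sub>R \<delta> t) # map (f t) [0..<m])) \<longlongrightarrow> D (Suc m) x (c' # map L [0..<m])) (at 0)"
  proof -
    define f2 where "f2 t j = (if j = 0 then (1/t) *\<^sub>R \<delta> t else f t (j - 1))" for t j
    define L2 where "L2 j = (if j = 0 then c' else L (j - 1))" for j
    have e1: "map (f2 t) [0..<Suc m] = ((1/t) *\<^sub>R \<delta> t) # map (f t) [0..<m]" for t
      by (simp only: map_upt_Suc) (simp add: f2_def)
    have e2: "map L2 [0..<Suc m] = c' # map L [0..<m]"
      by (simp only: map_upt_Suc) (simp add: L2_def)
    have "((\<lambda>t. D (Suc m) x (map (f2 t) [0..<Suc m])) \<longlongrightarrow> D (Suc m) x (map L2 [0..<Suc m])) (at 0)"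
    proof (rule ml_tendsto[OF M3])
      fix j assume j: "j < Suc m"
      show "((\<lambda>t. f2 t j) \<longlongrightarrow> L2 j) (at 0)"
      proof (cases j)
        case 0 then show ?thesis using dq by (simp add: f2_def L2_def)
      next
        case (Suc j') then show ?thesis using f[of j'] j by (simp add: f2_def L2_def)
      qed
    qed
    then show ?thesis unfolding e1 e2 .
  qed
  show ?thesis using tendsto_add[OF A B] by (simp add: decomp x_def)
qed

lemma D_chain:
  fixes D :: "nat \<Rightarrow> 'x::real_normed_vector \<Rightarrow> 'x list \<Rightarrow> 'y::real_normed_vector"
  assumes HD: "higher_derivs \<Phi> D"
    and c: "(c has_vector_derivative c') (at s)"
    and g: "\<And>i. i < m \<Longrightarrow> (g i has_vector_derivative g' i) (at s)"
  shows "((\<lambda>s. D m (c s) (map (\<lambda>i. g i s) [0..<m])) has_vector_derivative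
           D (Suc m) (c s) (c' # map (\<lambda>i. g i s) [0..<m]) +
           (\<Sum>i<m. D m (c s) ((map (\<lambda>i. g i s) [0..<m])[i := g' i]))) (at s)"
  unfolding vd_iff
proof -
  have A: "((\<lambda>t. (1/t) *\<^sub>R (D m (c (s+t)) (map (\<lambda>i. g i (s+t)) [0..<m]) - D m (c s) (map (\<lambda>i. g i (s+t)) [0..<m])))
          \<longlongrightarrow> D (Suc m) (c s) (c' # map (\<lambda>i. g i s) [0..<m])) (at 0)"
    using D_step[OF HD c, of m "\<lambda>t i. g i (s+t)" "\<lambda>i. g i s"] g cont_shift by blast
  have B: "((\<lambda>t. (1/t) *\<^sub>R (D m (c s) (map (\<lambda>i. g i (s+t)) [0..<m]) - D m (c s) (map (\<lambda>i. g i s) [0..<m])))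
          \<longlongrightarrow> (\<Sum>i<m. D m (c s) ((map (\<lambda>i. g i s) [0..<m])[i := g' i]))) (at 0)"
    using ml_deriv[OF hd_ml[OF HD, of m "c s"] g] unfolding vd_iff by simp
  show "((\<lambda>h. (1 / h) *\<^sub>R (D m (c (s + h)) (map (\<lambda>i. g i (s + h)) [0..<m]) - D m (c s) (map (\<lambda>i. g i s) [0..<m])))
        \<longlongrightarrow> D (Suc m) (c s) (c' # map (\<lambda>i. g i s) [0..<m]) + (\<Sum>i<m. D m (c s) ((map (\<lambda>i. g i s) [0..<m])[i := g' i])))
        (at 0)"
    using tendsto_add[OF A B] by (simp add: algebra_simps)
qed



lemma N_bound:
  fixes D :: "nat \<Rightarrow> 'x::real_normed_vector \<Rightarrow> 'x list \<Rightarrow> 'y::real_normed_vector"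
  assumes HD: "higher_derivs \<Phi> D" and l: "length hs = m"
  shows "norm (D m (x+h) hs - D m x hs - D (Suc m) x (h # hs)) \<le>
    (mnorm m (\<lambda>hs. D m (x+h) hs - D m x hs - D (Suc m) x (h # hs)) / norm h) * norm h * prod_list (map norm hs)"
proof (cases "h = 0")
  case True
  have M3: "bounded_multilinear (Suc m) (D (Suc m) x)" using hd_ml[OF HD] by auto
  have "D (Suc m) x (0 # hs) = 0" by (rule ml_zero[OF M3]) (use l in auto)
  then show ?thesis using True by simp
next
  case False
  then show ?thesis using ml_mnorm[OF N_ml[OF HD, where x=x and h=h] l] by simp
qed

lemma lin_at0:
  fixes L :: "'a::real_normed_vector \<Rightarrow> 'b::real_normed_vector"
  assumes lin: "linear L" and c0: "c0 > 0" and bb: "\<And>v. norm (L v) \<ge> c0 * norm v"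
    and cl: "closed (range L)"
    and lim: "((\<lambda>t. L ((1/t) *\<^sub>R (x t - x 0))) \<longlongrightarrow> q) (at 0)"
  shows "x differentiable (at 0)"
proof -
  have "q \<in> range L"
    by (rule Lim_in_closed_set[OF cl _ _ lim]) (auto simp: trivial_limit_at)
  then obtain p where p: "q = L p" by blast
  have "((\<lambda>t. (1/t) *\<^sub>R (x t - x 0) - p) \<longlongrightarrow> 0) (at 0)"
  proof (rule Lim_null_comparison)
    show "\<forall>\<^sub>F t in at 0. norm ((1/t) *\<^sub>R (x t - x 0) - p) \<le> norm (L ((1/t) *\<^sub>R (x t - x 0)) - q) / c0"
    proof (intro always_eventually allI)
      fix t
      have "c0 * norm ((1/t) *\<^sub>R (x t - x 0) - p) \<le> norm (L ((1/t) *\<^sub>R (x t - x 0) - p))" by (rule bb)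
      also have "\<dots> = norm (L ((1/t) *\<^sub>R (x t - x 0)) - q)" by (simp add: p linear_diff[OF lin])
      finally show "norm ((1/t) *\<^sub>R (x t - x 0) - p) \<le> norm (L ((1/t) *\<^sub>R (x t - x 0)) - q) / c0"
        using c0 by (simp add: field_simps)
    qed
    have "((\<lambda>t. norm (L ((1/t) *\<^sub>R (x t - x 0)) - q)) \<longlongrightarrow> 0) (at 0)"
      using lim by (simp add: tendsto_norm_zero_iff Lim_null[symmetric])
    then show "((\<lambda>t. norm (L ((1/t) *\<^sub>R (x t - x 0)) - q) / c0) \<longlongrightarrow> 0) (at 0)"
      using tendsto_divide[OF _ tendsto_const[of c0]] c0 by fastforce
  qed
  then have "((\<lambda>t. (1/t) *\<^sub>R (x (0 + t) - x 0)) \<longlongrightarrow> p) (at 0)"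
    by (simp add: Lim_null[symmetric])
  then have "(x has_vector_derivative p) (at 0)" by (simp add: vd_iff)
  then show ?thesis by (rule differentiableI_vector)
qed

lemma hvd_sum_list:
  fixes f :: "'l \<Rightarrow> real \<Rightarrow> 'b::real_normed_vector"
  shows "(\<And>l. l \<in> set Q \<Longrightarrow> ((\<lambda>s. f l s) has_vector_derivative d l) (at s)) \<Longrightarrow>
    ((\<lambda>s. sum_list (map (\<lambda>l. f l s) Q)) has_vector_derivative sum_list (map d Q)) (at s)"
  by (induction Q) (auto intro!: has_vector_derivative_add)

lemma sc_bl: "sc_group T \<Longrightarrow> bounded_linear (T s)" by (simp add: sc_group_def)
lemma sc_0: "sc_group T \<Longrightarrow> T 0 x = x" by (simp add: sc_group_def)
lemma sc_add: "sc_group T \<Longrightarrow> T (s + t) x = T s (T t x)" by (simp add: sc_group_def)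
lemma sc_cont: "sc_group T \<Longrightarrow> ((\<lambda>s. T s x) \<longlongrightarrow> T s0 x) (at s0)"
  unfolding sc_group_def continuous_on_def by auto

lemma sc_deriv:
  assumes T: "sc_group T" and x: "x \<in> gen_dom T"
  shows "((\<lambda>s. T s x) has_vector_derivative T s (gen T x)) (at s)"
proof -
  have "((\<lambda>h. T h x) has_vector_derivative gen T x) (at 0)"
    using x unfolding gen_dom_def gen_def by (simp add: vector_derivative_works)
  then have "((\<lambda>h. T s (T h x)) has_vector_derivative T s (gen T x)) (at 0)"
    by (rule bounded_linear.has_vector_derivative[OF sc_bl[OF T]])
  then have "((\<lambda>h. (1/h) *\<^sub>R (T s (T (0 + h) x) - T s (T 0 x))) \<longlongrightarrow> T s (gen T x)) (at 0)"
    unfolding vd_iff .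
  then show ?thesis unfolding vd_iff by (simp add: sc_add[OF T] sc_0[OF T])
qed



lemma map_nth_fun: "map (\<lambda>i. f (xs ! i)) [0..<length xs] = map f xs"
  by (rule nth_equalityI) simp_all

locale setting =
  fixes T :: "real \<Rightarrow> 'a::banach \<Rightarrow> 'a" and \<Phi> :: "real \<times> 'a \<Rightarrow> 'a"
    and D :: "nat \<Rightarrow> real \<times> 'a \<Rightarrow> (real \<times> 'a) list \<Rightarrow> 'a" and u0 :: 'a and c0 :: real
  assumes T: "sc_group T" and HD: "higher_derivs \<Phi> D"
    and \<Phi>c: "\<And>s. \<Phi> (s, T s u0) = 0"
    and c0: "c0 > 0" and bb: "\<And>v. norm (D 1 (0,u0) [(0,v)]) \<ge> c0 * norm v"
    and cl: "closed (range (\<lambda>v. D 1 (0,u0) [(0,v)]))"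
begin

definition \<gamma> :: "nat \<Rightarrow> real \<Rightarrow> 'a" where "\<gamma> j s = T s ((gen T ^^ j) u0)"
definition cc :: "real \<Rightarrow> real \<times> 'a" where "cc s = (s, T s u0)"
fun sl :: "nat option \<Rightarrow> real \<Rightarrow> real \<times> 'a" where
  "sl None s = (1, 0)" | "sl (Some j) s = (0, \<gamma> j s)"
definition tm :: "nat option list \<Rightarrow> real \<Rightarrow> 'a" where
  "tm ls s = D (length ls) (cc s) (map (\<lambda>q. sl q s) ls)"
definition bump :: "nat option list \<Rightarrow> nat \<Rightarrow> nat option list" where
  "bump ls i = ls[i := map_option Suc (ls ! i)]"
definition dterm :: "nat option list \<Rightarrow> nat option list list" where
  "dterm ls = (None # ls) # (Some 1 # ls) # map (bump ls) (filter (\<lambda>i. ls ! i \<noteq> None) [0..<length ls])"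
definition lvl :: "nat \<Rightarrow> nat option list \<Rightarrow> bool" where
  "lvl n ls \<longleftrightarrow> (\<forall>j. Some j \<in> set ls \<longrightarrow> j < n)"
definition gd :: "nat \<Rightarrow> bool" where "gd k \<longleftrightarrow> (\<forall>j<k. (gen T ^^ j) u0 \<in> gen_dom T)"

lemma ml: "bounded_multilinear m (D m x)" using hd_ml[OF HD] .

lemma gamma_fun: "\<gamma> j = (\<lambda>s. T s ((gen T ^^ j) u0))" by (rule ext) (simp add: \<gamma>_def)

lemma gamma_deriv: "gd k \<Longrightarrow> j < k \<Longrightarrow> (\<gamma> j has_vector_derivative \<gamma> (Suc j) s) (at s)"
  unfolding gamma_fun gd_def using sc_deriv[OF T] by simp

lemma gamma_cont: "((\<lambda>t. \<gamma> j (s+t)) \<longlongrightarrow> \<gamma> j s) (at 0)"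
  unfolding gamma_fun by (rule LIM_offset_zero) (rule sc_cont[OF T])

lemma cc_fun: "cc = (\<lambda>s. (s, \<gamma> 0 s))" by (rule ext) (simp add: cc_def \<gamma>_def)

lemma cc_deriv: "gd k \<Longrightarrow> 0 < k \<Longrightarrow> (cc has_vector_derivative (1, \<gamma> 1 s)) (at s)"
  unfolding cc_fun using gamma_deriv[of k 0 s]
  by (auto intro!: has_vector_derivative_Pair)

lemma sl_deriv:
  assumes "gd k" "\<And>j. q = Some j \<Longrightarrow> j < k"
  shows "((\<lambda>s. sl q s) has_vector_derivative (case q of None \<Rightarrow> 0 | Some j \<Rightarrow> sl (Some (Suc j)) s)) (at s)"
proof (cases q)
  case None then show ?thesis by simp
next
  case (Some j)
  then show ?thesis using gamma_deriv[OF assms(1), of j s] assms(2)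
    by (auto intro!: has_vector_derivative_Pair)
qed

lemma tm_deriv:
  assumes g: "gd k" and k: "0 < k" and lv: "lvl k ls"
  shows "(tm ls has_vector_derivative sum_list (map (\<lambda>l. tm l s) (dterm ls))) (at s)"
proof -
  define m where "m = length ls"
  define G where "G s = map (\<lambda>q. sl q s) ls" for s
  have lG: "length (G s) = m" for s by (simp add: G_def m_def)
  have Geq: "map (\<lambda>i. sl (ls ! i) s) [0..<m] = G s" for s
    unfolding G_def m_def by (rule map_nth_fun)
  have slv: "\<And>j. ls ! i = Some j \<Longrightarrow> j < k" if "i < m" for i
    using lv that unfolding lvl_def m_def by (metis nth_mem)
  have ch: "((\<lambda>s. D m (cc s) (map (\<lambda>i. sl (ls ! i) s) [0..<m])) has_vector_derivative
           D (Suc m) (cc s) ((1, \<gamma> 1 s) # map (\<lambda>i. sl (ls ! i) s) [0..<m]) +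
           (\<Sum>i<m. D m (cc s) ((map (\<lambda>i. sl (ls ! i) s) [0..<m])[i :=
              (case ls ! i of None \<Rightarrow> 0 | Some j \<Rightarrow> sl (Some (Suc j)) s)]))) (at s)"
    by (rule D_chain[OF HD cc_deriv[OF g k]]) (rule sl_deriv[OF g slv])
  have f_eq: "(\<lambda>s. D m (cc s) (map (\<lambda>i. sl (ls ! i) s) [0..<m])) = tm ls"
    by (rule ext) (subst Geq, simp add: tm_def G_def m_def)
  have v1: "D (Suc m) (cc s) ((1, \<gamma> 1 s) # G s) = tm (None # ls) s + tm (Some 1 # ls) s"
  proof -
    have "D (Suc m) (cc s) (((1, 0) # G s)[0 := (1,0) + (0, \<gamma> 1 s)]) =
      D (Suc m) (cc s) (((1, 0) # G s)[0 := (1,0)]) + D (Suc m) (cc s) (((1, 0) # G s)[0 := (0, \<gamma> 1 s)])"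
      by (rule ml_add[OF ml]) (auto simp: lG)
    then show ?thesis by (simp add: tm_def G_def m_def)
  qed
  have v2: "(\<Sum>i<m. D m (cc s) ((G s)[i := (case ls ! i of None \<Rightarrow> 0 | Some j \<Rightarrow> sl (Some (Suc j)) s)]))
      = sum_list (map (\<lambda>l. tm l s) (map (bump ls) (filter (\<lambda>i. ls ! i \<noteq> None) [0..<length ls])))"
  proof -
    have "sum_list (map (\<lambda>l. tm l s) (map (bump ls) (filter (\<lambda>i. ls ! i \<noteq> None) [0..<length ls])))
       = (\<Sum>i<m. if ls ! i \<noteq> None then tm (bump ls i) s else 0)"
      by (simp add: sum_list_map_filter' sum_list_upt_nat m_def o_def)
    also have "\<dots> = (\<Sum>i<m. D m (cc s) ((G s)[i := (case ls ! i of None \<Rightarrow> 0 | Some j \<Rightarrow> sl (Some (Suc j)) s)]))"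
    proof (rule sum.cong[OF refl])
      fix i assume i: "i \<in> {..<m}"
      show "(if ls ! i \<noteq> None then tm (bump ls i) s else 0) =
         D m (cc s) ((G s)[i := (case ls ! i of None \<Rightarrow> 0 | Some j \<Rightarrow> sl (Some (Suc j)) s)])"
      proof (cases "ls ! i")
        case None
        then show ?thesis using ml_upd0[OF ml, of "G s" m i] i lG by simp
      next
        case (Some j)
        have "(G s)[i := sl (Some (Suc j)) s] = map (\<lambda>q. sl q s) (bump ls i)"
          using Some by (simp add: G_def bump_def map_update)
        then show ?thesis using Some by (simp add: tm_def bump_def m_def)
      qed
    qed
    finally show ?thesis by simp
  qed
  have tmG: "(\<lambda>s. D (length ls) (cc s) (G s)) = tm ls"
    by (rule ext) (simp add: tm_def G_def)
  show ?thesis using ch unfolding Geq v1 v2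
    by (simp add: dterm_def m_def tmG add.assoc)
qed

end


lemma sum_list_map_concat: "sum_list (map f (concat xss)) = sum_list (map (\<lambda>xs. sum_list (map f xs)) xss)"
  by (induction xss) auto

context setting begin

lemma D0: "D 0 x [] = \<Phi> x" using HD by (cases x) (simp add: higher_derivs_def)

lemma tm_nil: "tm [] s = 0"
  by (simp add: tm_def D0 cc_def \<Phi>c)

lemma cc0: "cc 0 = (0, u0)" by (simp add: cc_def sc_0[OF T])

lemma linL: "linear (\<lambda>v. D 1 (0,u0) [(0,v)])"
proof (rule linearI)
  fix a b :: 'a and r :: real
  have "D 1 (0,u0) ([(0,0)][0 := (0,a) + (0,b)]) = D 1 (0,u0) ([(0,0)][0 := (0,a)]) + D 1 (0,u0) ([(0,0)][0 := (0,b)])"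
    by (rule ml_add[OF ml]) auto
  then show "D 1 (0,u0) [(0,a+b)] = D 1 (0,u0) [(0,a)] + D 1 (0,u0) [(0,b)]" by simp
  have "D 1 (0,u0) ([(0,0)][0 := r *\<^sub>R (0,a)]) = r *\<^sub>R D 1 (0,u0) ([(0,0)][0 := (0,a)])"
    by (rule ml_scale[OF ml]) auto
  then show "D 1 (0,u0) [(0, r *\<^sub>R a)] = r *\<^sub>R D 1 (0,u0) [(0,a)]" by simp
qed

lemma dterm_lvl:
  assumes lv: "lvl n ls" and n: "1 \<le> n" and l: "l \<in> set (dterm ls)"
  shows "lvl (Suc n) l"
proof -
  have "l = None # ls \<or> l = Some 1 # ls \<or> (\<exists>i<length ls. ls ! i \<noteq> None \<and> l = bump ls i)"
    using l by (auto simp: dterm_def)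
  then show ?thesis
  proof (elim disjE exE conjE)
    assume "l = None # ls" then show ?thesis using lv by (auto simp: lvl_def)
  next
    assume "l = Some 1 # ls" then show ?thesis using lv n by (auto simp: lvl_def)
  next
    fix i assume i: "i < length ls" "ls ! i \<noteq> None" and lb: "l = bump ls i"
    obtain j' where j': "ls ! i = Some j'" using i(2) by auto
    have "j' < n" using lv j' i(1) unfolding lvl_def by (metis nth_mem)
    show ?thesis unfolding lvl_def
    proof (intro allI impI)
      fix j assume "Some j \<in> set l"
      then have "Some j \<in> insert (map_option Suc (ls ! i)) (set ls)"
        using lb set_update_subset_insert unfolding bump_def by fastforce
      then show "j < Suc n" using j' \<open>j' < n\<close> lv unfolding lvl_def by auto
    qed
  qed
qed

lemma zero_deriv:
  fixes f :: "real \<Rightarrow> 'b::real_normed_vector"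
  assumes "(f has_vector_derivative d) (at s)" "\<And>s. f s = 0"
  shows "d = 0"
proof -
  have "f = (\<lambda>_. 0)" using assms(2) by (rule ext)
  then show ?thesis using assms(1) vector_derivative_unique_at has_vector_derivative_const by metis
qed

lemma lvl_mono: "lvl n l \<Longrightarrow> n \<le> k \<Longrightarrow> lvl k l" by (auto simp: lvl_def)

lemma Qex:
  assumes g: "gd k" and n: "1 \<le> n" "n \<le> k"
  shows "\<exists>Q. (\<forall>l\<in>set Q. lvl n l) \<and> (\<forall>s. tm [Some n] s + sum_list (map (\<lambda>l. tm l s) Q) = 0)"
  using n
proof (induction n rule: nat_induct_at_least)
  case base
  have k: "0 < k" using base by simp
  have "sum_list (map (\<lambda>l. tm l s) (dterm [])) = 0" for s
    using zero_deriv[OF tm_deriv[OF g k, of "[]" s]] tm_nil by (auto simp: lvl_def)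
  then have "tm [Some 1] s + sum_list (map (\<lambda>l. tm l s) [[None]]) = 0" for s
    by (simp add: dterm_def add.commute)
  moreover have "lvl 1 [None]" by (simp add: lvl_def)
  ultimately show ?case by (intro exI[of _ "[[None]]"]) auto
next
  case (Suc n)
  have k: "0 < k" "n < k" using Suc by auto
  obtain Q where lQ: "\<forall>l\<in>set Q. lvl n l" and eq: "\<forall>s. tm [Some n] s + sum_list (map (\<lambda>l. tm l s) Q) = 0"
    using Suc by auto
  have lk: "lvl k l" if "l \<in> set Q" for l using lQ that lvl_mono k by auto
  have d: "((\<lambda>s. tm [Some n] s + sum_list (map (\<lambda>l. tm l s) Q)) has_vector_derivative
      sum_list (map (\<lambda>l. tm l s) (dterm [Some n])) + sum_list (map (\<lambda>l. sum_list (map (\<lambda>l'. tm l' s) (dterm l))) Q)) (at s)"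
    for s
  proof (rule has_vector_derivative_add)
    show "(tm [Some n] has_vector_derivative sum_list (map (\<lambda>l. tm l s) (dterm [Some n]))) (at s)"
      by (rule tm_deriv[OF g k(1)]) (use k in \<open>auto simp: lvl_def\<close>)
    show "((\<lambda>s. sum_list (map (\<lambda>l. tm l s) Q)) has_vector_derivative
        sum_list (map (\<lambda>l. sum_list (map (\<lambda>l'. tm l' s) (dterm l))) Q)) (at s)"
      by (rule hvd_sum_list) (rule tm_deriv[OF g k(1) lk])
  qed
  have z: "sum_list (map (\<lambda>l. tm l s) (dterm [Some n])) + sum_list (map (\<lambda>l. sum_list (map (\<lambda>l'. tm l' s) (dterm l))) Q) = 0"
    for s by (rule zero_deriv[OF d]) (use eq in auto)
  have dt: "dterm [Some n] = [[None, Some n], [Some 1, Some n], [Some (Suc n)]]"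
    by (simp add: dterm_def bump_def)
  define Q' where "Q' = [None, Some n] # [Some 1, Some n] # concat (map dterm Q)"
  have "tm [Some (Suc n)] s + sum_list (map (\<lambda>l. tm l s) Q') = 0" for s
    using z[of s] unfolding dt Q'_def by (simp add: sum_list_map_concat algebra_simps o_def)
  moreover have "\<forall>l\<in>set Q'. lvl (Suc n) l"
    using lQ Suc.hyps dterm_lvl unfolding Q'_def by (auto simp: lvl_def)
  ultimately show ?case by blast
qed

end


context setting begin

lemma k_step:
  assumes g: "gd k" and k: "0 < k"
  shows "(gen T ^^ k) u0 \<in> gen_dom T"
proof -
  obtain Q where lQ: "\<forall>l\<in>set Q. lvl k l" and eq: "\<forall>s. tm [Some k] s + sum_list (map (\<lambda>l. tm l s) Q) = 0"
    using Qex[OF g _ order_refl] k by auto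
  define y where "y s = - sum_list (map (\<lambda>l. tm l s) Q)" for s
  define y' where "y' = - sum_list (map (\<lambda>l. sum_list (map (\<lambda>l'. tm l' 0) (dterm l))) Q)"
  have yd: "(y has_vector_derivative y') (at 0)"
    unfolding y_def y'_def
    by (intro has_vector_derivative_minus hvd_sum_list tm_deriv[OF g k]) (use lQ in auto)
  have By: "D 1 (cc s) [(0, \<gamma> k s)] = y s" for s
    using eq[rule_format, of s] by (simp add: y_def tm_def eq_neg_iff_add_eq_0)
  define L where "L v = D 1 (0,u0) [(0,v)]" for v
  have Ll: "linear L" unfolding L_def by (rule linL)
  have eqL: "L ((1/t) *\<^sub>R (\<gamma> k t - \<gamma> k 0)) =
     (1/t) *\<^sub>R (y (0 + t) - y 0) - (1/t) *\<^sub>R (D 1 (cc (0+t)) (map (\<lambda>i. (0, \<gamma> k t)) [0..<1]) - D 1 (cc 0) (map (\<lambda>i. (0, \<gamma> k t)) [0..<1]))" for t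
  proof -
    have "L ((1/t) *\<^sub>R (\<gamma> k t - \<gamma> k 0)) = (1/t) *\<^sub>R (L (\<gamma> k t) - L (\<gamma> k 0))"
      by (simp add: linear_scale[OF Ll] linear_diff[OF Ll])
    moreover have "L (\<gamma> k 0) = y 0" using By[of 0] by (simp add: L_def cc0)
    moreover have "L (\<gamma> k t) = D 1 (cc 0) [(0, \<gamma> k t)]" by (simp add: L_def cc0)
    moreover have "D 1 (cc t) [(0, \<gamma> k t)] = y t" by (rule By)
    ultimately show ?thesis by (simp add: algebra_simps)
  qed
  have lim1: "((\<lambda>t. (1/t) *\<^sub>R (y (0 + t) - y 0)) \<longlongrightarrow> y') (at 0)" using yd unfolding vd_iff .
  have lim2: "((\<lambda>t. (1/t) *\<^sub>R (D 1 (cc (0+t)) (map (\<lambda>i. (0, \<gamma> k t)) [0..<1]) - D 1 (cc 0) (map (\<lambda>i. (0, \<gamma> k t)) [0..<1])))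
      \<longlongrightarrow> D (Suc 1) (cc 0) ((1, \<gamma> 1 0) # map (\<lambda>i. (0, \<gamma> k 0)) [0..<1])) (at 0)"
  proof (rule D_step[OF HD cc_deriv[OF g k]])
    fix i show "((\<lambda>t. (0::real, \<gamma> k t)) \<longlongrightarrow> (0, \<gamma> k 0)) (at 0)"
      using gamma_cont[of k 0] by (intro tendsto_Pair) auto
  qed
  have "((\<lambda>t. L ((1/t) *\<^sub>R (\<gamma> k t - \<gamma> k 0))) \<longlongrightarrow> y' - D (Suc 1) (cc 0) ((1, \<gamma> 1 0) # map (\<lambda>i. (0, \<gamma> k 0)) [0..<1])) (at 0)"
    unfolding eqL by (rule tendsto_diff[OF lim1 lim2])
  then have "\<gamma> k differentiable (at 0)"
    by (rule lin_at0[OF Ll c0 bb[folded L_def] cl[folded L_def]])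
  then show ?thesis unfolding gen_dom_def gamma_fun by simp
qed

end


lemma arith_k0:
  fixes c0 p aa nw na X Y :: real
  assumes c0: "c0 > 0" and p: "p \<ge> 0" "p < c0/2" and aa: "aa > 0" and nw: "nw \<ge> 0" and na: "na \<ge> 0"
    and F2: "c0 * nw \<le> Y" and F3: "Y \<le> X + aa * na" and F1: "X \<le> p * (aa + nw)"
  shows "X / aa \<le> p * (2 + 2 * na / c0)"
proof -
  have "p * (aa + nw) \<le> (c0/2) * (aa + nw)" using p aa nw by (intro mult_right_mono) auto
  then have "c0 * nw \<le> (c0/2) * (aa + nw) + aa * na" using F1 F2 F3 by linarith
  moreover have "(c0/2) * (aa + nw) = c0*aa/2 + c0*nw/2" by (simp add: algebra_simps)
  ultimately have "c0 * nw \<le> c0 * aa + 2 * aa * na" by linarith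
  then have "nw \<le> aa + 2 * aa * na / c0" using c0 by (simp add: field_simps)
  then have "p * (aa + nw) \<le> p * (aa + (aa + 2 * aa * na / c0))" using p by (intro mult_left_mono) auto
  also have "\<dots> = aa * (p * (2 + 2 * na / c0))" by (simp add: algebra_simps)
  finally have "X \<le> aa * (p * (2 + 2 * na / c0))" using F1 by linarith
  then show ?thesis using aa by (simp add: field_simps)
qed

lemma mnorm0: "mnorm 0 M = norm (M [])"
proof -
  have "{norm (M hs) |hs. length hs = 0 \<and> (\<forall>h\<in>set hs. norm h \<le> 1)} = {norm (M [])}" by auto
  then show ?thesis by (simp add: mnorm_def)
qed

context setting begin

lemma k0: "u0 \<in> gen_dom T"
proof -
  define x0 where "x0 = (0::real, u0)"
  define w where "w t = T t u0 - u0" for t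
  define h where "h t = (t, w t)" for t
  define a where "a = D 1 x0 [(1,0)]"
  define L where "L v = D 1 (0,u0) [(0,v)]" for v
  define \<phi> where "\<phi> hh = mnorm 0 (\<lambda>hs. D 0 (x0 + hh) hs - D 0 x0 hs - D (Suc 0) x0 (hh # hs)) / norm hh" for hh
  have Ll: "linear L" unfolding L_def by (rule linL)
  have \<phi>lim: "(\<phi> \<longlongrightarrow> 0) (at 0)" unfolding \<phi>_def by (rule hd_lim[OF HD])
  have \<phi>0: "\<phi> 0 = 0" by (simp add: \<phi>_def)
  have \<phi>nn: "\<phi> hh \<ge> 0" for hh by (simp add: \<phi>_def mnorm0)
  have iC: "isCont \<phi> 0" using \<phi>lim \<phi>0 by (simp add: isCont_def)
  have wlim: "(w \<longlongrightarrow> 0) (at 0)"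
  proof -
    have "((\<lambda>t. T t u0) \<longlongrightarrow> T 0 u0) (at 0)" by (rule sc_cont[OF T])
    then show ?thesis unfolding w_def using sc_0[OF T] by (simp add: Lim_null[symmetric])
  qed
  have hlim: "(h \<longlongrightarrow> 0) (at 0)"
  proof -
    have "((\<lambda>t. (t, w t)) \<longlongrightarrow> (0, 0)) (at 0)" by (intro tendsto_Pair tendsto_ident_at wlim)
    moreover have "h = (\<lambda>t. (t, w t))" by (rule ext) (simp add: h_def)
    ultimately show ?thesis by (simp add: zero_prod_def)
  qed
  have \<phi>h: "((\<lambda>t. \<phi> (h t)) \<longlongrightarrow> 0) (at 0)"
    using isCont_tendsto_compose[OF iC hlim] \<phi>0 by simp
  have Nb: "norm (D 1 x0 [h t]) \<le> \<phi> (h t) * norm (h t)" for t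
  proof -
    have "norm (D 0 (x0 + h t) [] - D 0 x0 [] - D (Suc 0) x0 (h t # [])) \<le> \<phi> (h t) * norm (h t) * prod_list (map norm [])"
      using N_bound[OF HD, where hs="[]" and m=0 and x=x0 and h="h t"] unfolding \<phi>_def by simp
    moreover have "x0 + h t = (t, T t u0)" by (simp add: x0_def h_def w_def)
    moreover have "D 0 x0 [] = 0" using \<Phi>c[of 0] sc_0[OF T] by (simp add: D0 x0_def)
    ultimately show ?thesis by (simp add: D0 \<Phi>c)
  qed
  have dec: "D 1 x0 [h t] = t *\<^sub>R a + L (w t)" for t
  proof -
    have "D 1 x0 ([(0,0)][0 := t *\<^sub>R (1,0) + (0, w t)]) = D 1 x0 ([(0,0)][0 := t *\<^sub>R (1,0)]) + D 1 x0 ([(0,0)][0 := (0, w t)])"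
      by (rule ml_add[OF ml]) auto
    moreover have "D 1 x0 ([(0,0)][0 := t *\<^sub>R (1,0)]) = t *\<^sub>R D 1 x0 ([(0,0)][0 := (1,0)])"
      by (rule ml_scale[OF ml]) auto
    moreover have "t *\<^sub>R (1::real, 0::'a) + (0, w t) = h t" by (simp add: h_def)
    ultimately show ?thesis by (simp add: a_def L_def x0_def)
  qed
  have nh: "norm (h t) \<le> \<bar>t\<bar> + norm (w t)" for t
    using norm_Pair_le[of t "w t"] by (simp add: h_def)
  have ev: "\<forall>\<^sub>F t in at 0. \<phi> (h t) < c0/2"
    using order_tendstoD(2)[OF \<phi>h, of "c0/2"] c0 by simp
  have "((\<lambda>t. L ((1/t) *\<^sub>R w t) + a) \<longlongrightarrow> 0) (at 0)"
  proof (rule Lim_null_comparison)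
    show "\<forall>\<^sub>F t in at 0. norm (L ((1/t) *\<^sub>R w t) + a) \<le> \<phi> (h t) * (2 + 2 * norm a / c0)"
    proof -
      have ne: "\<forall>\<^sub>F t in at (0::real). t \<noteq> 0" by (simp add: eventually_at_filter)
      from ev ne show ?thesis
    proof (eventually_elim)
      fix t assume p: "\<phi> (h t) < c0/2" and t: "t \<noteq> 0"
      have e: "L ((1/t) *\<^sub>R w t) + a = (1/t) *\<^sub>R (t *\<^sub>R a + L (w t))"
        using t by (simp add: linear_scale[OF Ll] algebra_simps)
      have F1: "norm (t *\<^sub>R a + L (w t)) \<le> \<phi> (h t) * (\<bar>t\<bar> + norm (w t))"
        using Nb[of t] dec[of t] mult_left_mono[OF nh[of t] \<phi>nn[of "h t"]] by simp
      have F2: "c0 * norm (w t) \<le> norm (L (w t))" unfolding L_def by (rule bb)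
      have F3: "norm (L (w t)) \<le> norm (t *\<^sub>R a + L (w t)) + \<bar>t\<bar> * norm a"
        using norm_triangle_ineq4[of "t *\<^sub>R a + L (w t)" "t *\<^sub>R a"] by simp
      have "norm (t *\<^sub>R a + L (w t)) / \<bar>t\<bar> \<le> \<phi> (h t) * (2 + 2 * norm a / c0)"
        by (rule arith_k0[OF c0 \<phi>nn p _ _ _ F2 F3 F1]) (use t in auto)
      then show "norm (L ((1/t) *\<^sub>R w t) + a) \<le> \<phi> (h t) * (2 + 2 * norm a / c0)"
        unfolding e by (simp add: divide_inverse_commute abs_inverse)
    qed
    qed
    show "((\<lambda>t. \<phi> (h t) * (2 + 2 * norm a / c0)) \<longlongrightarrow> 0) (at 0)"
      using tendsto_mult_left_zero[OF \<phi>h] by simp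
  qed
  then have "((\<lambda>t. L ((1/t) *\<^sub>R w t)) \<longlongrightarrow> - a) (at 0)"
    using tendsto_diff[OF _ tendsto_const[of a]] by fastforce
  then have "((\<lambda>t. L ((1/t) *\<^sub>R ((\<lambda>t. T t u0) t - (\<lambda>t. T t u0) 0))) \<longlongrightarrow> - a) (at 0)"
    by (simp add: w_def sc_0[OF T])
  then have "(\<lambda>t. T t u0) differentiable (at 0)"
    by (rule lin_at0[OF Ll c0 bb[folded L_def] cl[folded L_def]])
  then show ?thesis by (simp add: gen_dom_def)
qed

lemma gd_all: "gd k"
proof (induction k)
  case 0 then show ?case by (simp add: gd_def)
next
  case (Suc k)
  have "(gen T ^^ k) u0 \<in> gen_dom T"
  proof (cases k)
    case 0 then show ?thesis using k0 by simp
  next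
    case (Suc k') then show ?thesis using k_step[OF Suc.IH] by simp
  qed
  then show ?case using Suc.IH by (auto simp: gd_def less_Suc_eq)
qed

lemma u0_Udom: "u0 \<in> Udom T l"
  using gd_all[of l] by (simp add: gd_def Udom_def)

end

theorem lemma2p10:
  fixes T :: "real \<Rightarrow> 'a::banach \<Rightarrow> 'a"
    and F :: "real \<Rightarrow> 'a \<Rightarrow> 'a"
    and \<epsilon>0 :: real and u0 :: 'a
    and DF :: "real \<Rightarrow> nat \<Rightarrow> real \<times> 'a \<Rightarrow> (real \<times> 'a) list \<Rightarrow> 'a"
    and Dlam :: "nat \<Rightarrow> nat \<Rightarrow> real \<Rightarrow> 'a \<Rightarrow> 'a list \<Rightarrow> 'a"
  assumes T: "sc_group T"
    and eps: "\<epsilon>0 > 0"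
    and F0: "F 0 u0 = 0"
    and A1: "\<forall>lam\<in>{-\<epsilon>0..\<epsilon>0}. higher_derivs (\<lambda>(s, u). T s (F lam (T (-s) u))) (DF lam)"
    and A2: "\<forall>l k u us. u \<in> Udom T l \<longrightarrow> set us \<subseteq> Udom T l \<longrightarrow>
               (\<forall>lam\<in>{-\<epsilon>0..\<epsilon>0}. Dlam 0 k lam u us = pderiv_su (DF lam) k 0 u us) \<and>
               Cl_with l {-\<epsilon>0..\<epsilon>0} (\<lambda>m lam. Dlam m k lam u us)"
    and A3: "\<forall>j k l. \<exists>c>0. \<forall>lam\<in>{-\<epsilon>0..\<epsilon>0}. \<forall>u us.
               length us = j \<longrightarrow> u \<in> Udom T l \<longrightarrow> set us \<subseteq> Udom T l \<longrightarrow>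
               u - u0 \<in> Udom T l \<longrightarrow> lnorm T l (u - u0) \<le> 1 \<longrightarrow>
               norm (Dlam l k lam u us) \<le> c * prod_list (map (lnorm T l) us)"
    and A4: "\<exists>c0>0. \<forall>lam\<in>{-\<epsilon>0..\<epsilon>0}.
               fredholm_index_zero (\<lambda>v. pderiv_su (DF lam) 0 0 u0 [v]) \<and>
               (\<forall>v. norm (pderiv_su (DF lam) 0 0 u0 [v]) \<ge> c0 * norm v)"
  shows "\<forall>l. u0 \<in> Udom T l"
proof -
  obtain c0 where c0: "c0 > 0" and h4: "\<forall>lam\<in>{-\<epsilon>0..\<epsilon>0}.
               fredholm_index_zero (\<lambda>v. pderiv_su (DF lam) 0 0 u0 [v]) \<and>
               (\<forall>v. norm (pderiv_su (DF lam) 0 0 u0 [v]) \<ge> c0 * norm v)"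
    using A4 by blast
  have lam0: "(0::real) \<in> {-\<epsilon>0..\<epsilon>0}" using eps by simp
  define \<Phi> where "\<Phi> = (\<lambda>(s, u). T s (F 0 (T (-s) u)))"
  have HD: "higher_derivs \<Phi> (DF 0)" using A1 lam0 unfolding \<Phi>_def by blast
  have \<Phi>c: "\<Phi> (s, T s u0) = 0" for s
  proof -
    have "T (-s) (T s u0) = u0" using sc_add[OF T, of "-s" s u0] sc_0[OF T] by simp
    moreover have "T s 0 = 0" using linear_0[OF bounded_linear.linear[OF sc_bl[OF T]]] by simp
    ultimately show ?thesis by (simp add: \<Phi>_def F0)
  qed
  have pd: "(\<lambda>v. pderiv_su (DF 0) 0 0 u0 [v]) = (\<lambda>v. DF 0 1 (0,u0) [(0,v)])"
    by (rule ext) (simp add: pderiv_su_def)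
  have fr: "fredholm_index_zero (\<lambda>v. DF 0 1 (0,u0) [(0,v)])" and bb: "\<And>v. norm (DF 0 1 (0,u0) [(0,v)]) \<ge> c0 * norm v"
    using h4 lam0 pd by (auto simp: pderiv_su_def)
  have cl: "closed (range (\<lambda>v. DF 0 1 (0,u0) [(0,v)]))" using fr by (simp add: fredholm_index_zero_def)
  interpret S: setting T \<Phi> "DF 0" u0 c0
    by unfold_locales (use T HD \<Phi>c c0 bb cl in auto)
  show ?thesis using S.u0_Udom by blast
qed

end
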